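(* Let $\Lambda_1,\Lambda_2,\Lambda_3,\Lambda_4\subset\mathbb{R}^3$ be the lattices spanned over $\mathbb{Z}$ by the rows of, respectively, $$\begin{bmatrix}2&1&1\\1&2&-1\\-2&2&2\end{bmatrix},\ \begin{bmatrix}1&2&1\\-1&1&2\\2&-2&2\end{bmatrix},\ \begin{bmatrix}1&1&2\\2&-1&1\\2&2&-2\end{bmatrix},\ \begin{bmatrix}2&-1&-1\\-1&2&-1\\2&2&2\end{bmatrix}.$$ Each $\Lambda_i$ is congruent to $\sqrt3A_2\oplus\sqrt{12}\,\mathbb{Z}$, and $\Lambda_1\cap\Lambda_2\cap\Lambda_3\cap\Lambda_4$ is the face-centered cubic lattice spanned by $(3,3,0)$, $(3,-3,0)$, $(0,3,-3)$.
   Context: A lattice is spanned by the rows of a matrix if it is the set of all integer linear combinations of those rows. $A_2$ denotes the planar hexagonal lattice with minimal norm $2$ (norm = squared length), so that $\sqrt3A_2\oplus\sqrt{12}\,\mathbb{Z}$ has Gram matrix $\begin{bmatrix}6&-3&0\\-3&6&0\\0&0&12\end{bmatrix}$. Two lattices are congruent if one is mapped to the other by an element of $SO(3)$. *)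

theory Defs
  imports "HOL-Analysis.Analysis"
begin

definition lattice_rows :: "real^3^3 \<Rightarrow> (real^3) set" where
  "lattice_rows M = {(\<Sum>i\<in>UNIV. of_int (c i) *\<^sub>R row i M) | c :: 3 \<Rightarrow> int. True}"

text \<open>A concrete model of sqrt3 A2 (+) sqrt12 Z in R^3: rows of this matrix have
  Gram matrix [[6,-3,0],[-3,6,0],[0,0,12]].\<close>
definition L0_basis :: "real^3^3" where
  "L0_basis = vector [vector [sqrt 6, 0, 0],
                      vector [- sqrt 6 / 2, 3 / sqrt 2, 0],
                      vector [0, 0, sqrt 12]]"

definition L0 :: "(real^3) set" where
  "L0 = lattice_rows L0_basis"

definition congruent3 :: "(real^3) set \<Rightarrow> (real^3) set \<Rightarrow> bool" where
  "congruent3 A B \<longleftrightarrow> (\<exists>R :: real^3^3. orthogonal_matrix R \<and> det R = 1 \<and> (\<lambda>x. R *v x) ` A = B)"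

end

theory Submission imports Defs begin

lemma lat3: "lattice_rows (vector [r1, r2, r3] :: real^3^3) =
   {of_int a *\<^sub>R r1 + of_int b *\<^sub>R r2 + of_int c *\<^sub>R r3 | a b c :: int. True}"
proof -
  have "(\<exists>f::3\<Rightarrow>int. x = (\<Sum>i\<in>UNIV. of_int (f i) *\<^sub>R row i (vector [r1, r2, r3] :: real^3^3)))
     \<longleftrightarrow> (\<exists>a b c::int. x = of_int a *\<^sub>R r1 + of_int b *\<^sub>R r2 + of_int c *\<^sub>R r3)" for x
  proof
    assume "\<exists>f::3\<Rightarrow>int. x = (\<Sum>i\<in>UNIV. of_int (f i) *\<^sub>R row i (vector [r1, r2, r3] :: real^3^3))"
    then obtain f :: "3\<Rightarrow>int" where "x = (\<Sum>i\<in>UNIV. of_int (f i) *\<^sub>R row i (vector [r1, r2, r3] :: real^3^3))" by blast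
    then show "\<exists>a b c::int. x = of_int a *\<^sub>R r1 + of_int b *\<^sub>R r2 + of_int c *\<^sub>R r3"
      by (auto simp: sum_3 row_def vec_lambda_eta)
  next
    assume "\<exists>a b c::int. x = of_int a *\<^sub>R r1 + of_int b *\<^sub>R r2 + of_int c *\<^sub>R r3"
    then obtain a b c :: int where x: "x = of_int a *\<^sub>R r1 + of_int b *\<^sub>R r2 + of_int c *\<^sub>R r3" by blast
    define f :: "3\<Rightarrow>int" where "f = (\<lambda>i. if i = 1 then a else if i = 2 then b else c)"
    have "x = (\<Sum>i\<in>UNIV. of_int (f i) *\<^sub>R row i (vector [r1, r2, r3] :: real^3^3))"
      by (simp add: x sum_3 row_def vec_lambda_eta f_def)
    then show "\<exists>f::3\<Rightarrow>int. x = (\<Sum>i\<in>UNIV. of_int (f i) *\<^sub>R row i (vector [r1, r2, r3] :: real^3^3))" by blast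
  qed
  then show ?thesis unfolding lattice_rows_def by blast
qed

lemma mem3: "x \<in> lattice_rows (vector [vector [a11,a12,a13], vector [a21,a22,a23], vector [a31,a32,a33]] :: real^3^3)
  \<longleftrightarrow> (\<exists>a b c::int. x$1 = of_int a * a11 + of_int b * a21 + of_int c * a31 \<and> x$2 = of_int a * a12 + of_int b * a22 + of_int c * a32 \<and> x$3 = of_int a * a13 + of_int b * a23 + of_int c * a33)"
  unfolding lat3 by (auto simp: vec_eq_iff forall_3)


lemma img:
  fixes R :: "real^3^3" and s :: int
  assumes "R *v r1 = u1" "R *v r2 = of_int s *\<^sub>R u2" "R *v r3 = of_int s *\<^sub>R u3" "s * s = 1"
  shows "(\<lambda>x. R *v x) ` lattice_rows (vector [r1, r2, r3]) = lattice_rows (vector [u1, u2, u3])"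
proof -
  have e: "R *v (of_int a *\<^sub>R r1 + of_int b *\<^sub>R r2 + of_int c *\<^sub>R r3)
     = of_int a *\<^sub>R u1 + of_int (b * s) *\<^sub>R u2 + of_int (c * s) *\<^sub>R u3" for a b c :: int
    using assms by (simp add: matrix_vector_right_distrib matrix_vector_mult_scaleR)
  have ss: "real_of_int s * real_of_int s = 1" using assms(4)
    by (metis of_int_1 of_int_mult)
  show ?thesis
    unfolding lat3
  proof (intro set_eqI iffI)
    fix y assume "y \<in> (\<lambda>x. R *v x) ` {of_int a *\<^sub>R r1 + of_int b *\<^sub>R r2 + of_int c *\<^sub>R r3 |a b c :: int. True}"
    then obtain a b c :: int where "y = R *v (of_int a *\<^sub>R r1 + of_int b *\<^sub>R r2 + of_int c *\<^sub>R r3)" by blast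
    then have "y = of_int a *\<^sub>R u1 + of_int (b * s) *\<^sub>R u2 + of_int (c * s) *\<^sub>R u3" using e by simp
    then show "y \<in> {of_int a *\<^sub>R u1 + of_int b *\<^sub>R u2 + of_int c *\<^sub>R u3 |a b c :: int. True}" by blast
  next
    fix y assume "y \<in> {of_int a *\<^sub>R u1 + of_int b *\<^sub>R u2 + of_int c *\<^sub>R u3 |a b c :: int. True}"
    then obtain a b c :: int where y: "y = of_int a *\<^sub>R u1 + of_int b *\<^sub>R u2 + of_int c *\<^sub>R u3" by blast
    have "y = R *v (of_int a *\<^sub>R r1 + of_int (b * s) *\<^sub>R r2 + of_int (c * s) *\<^sub>R r3)"
      unfolding e y by (simp add: mult.assoc assms(4))
    then show "y \<in> (\<lambda>x. R *v x) ` {of_int a *\<^sub>R r1 + of_int b *\<^sub>R r2 + of_int c *\<^sub>R r3 |a b c :: int. True}" by blast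
  qed
qed

lemma s6: "sqrt 6 = sqrt 2 * sqrt 3" by (simp flip: real_sqrt_mult)
lemma s12: "sqrt 12 = 2 * sqrt 3"
  by (rule real_sqrt_unique) (simp_all add: power_mult_distrib)
lemma s2i: "3 / sqrt 2 = 3/2 * sqrt 2"
  by (simp add: field_simps)

lemma L0_eq: "L0 = lattice_rows (vector [vector [sqrt 2 * sqrt 3, 0, 0], vector [- (sqrt 2 * sqrt 3) / 2, 3/2 * sqrt 2, 0], vector [0, 0, 2 * sqrt 3]])"
  unfolding L0_def L0_basis_def s6 s12 s2i ..

lemma cong1: "congruent3 (lattice_rows (vector [vector [2,1,1], vector [1,2,-1], vector [-2,2,2]])) L0"
proof -
  define R :: "real^3^3" where "R = vector [vector [sqrt 2 * sqrt 3 / 3, sqrt 2 * sqrt 3 / 6, sqrt 2 * sqrt 3 / 6],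
     vector [0, - sqrt 2 / 2, sqrt 2 / 2], vector [sqrt 3 / 3, - sqrt 3 / 3, - sqrt 3 / 3]]"
  have o: "orthogonal_matrix R"
    unfolding orthogonal_matrix_def R_def
    by (simp add: vec_eq_iff forall_3 matrix_matrix_mult_def transpose_def sum_3 mat_def algebra_simps)
  have d: "det R = 1"
    unfolding R_def det_3 by (simp add: algebra_simps)
  have "(\<lambda>x. R *v x) ` (lattice_rows (vector [vector [2,1,1], vector [1,2,-1], vector [-2,2,2]])) = L0"
    unfolding L0_eq
    by (rule img[where s="-1"]) (simp_all add: R_def vec_eq_iff forall_3 matrix_vector_mult_def sum_3 algebra_simps)
  then show ?thesis unfolding congruent3_def using o d by blast
qed


lemma cong2: "congruent3 (lattice_rows (vector [vector [1,2,1], vector [-1,1,2], vector [2,-2,2]])) L0"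
proof -
  define R :: "real^3^3" where "R = vector [vector [(sqrt 2 * sqrt 3) / 6, (sqrt 2 * sqrt 3) / 3, (sqrt 2 * sqrt 3) / 6], vector [sqrt 2 / 2, 0, - sqrt 2 / 2], vector [- sqrt 3 / 3, sqrt 3 / 3, - sqrt 3 / 3]]"
  have o: "orthogonal_matrix R"
    unfolding orthogonal_matrix_def R_def
    by (simp add: vec_eq_iff forall_3 matrix_matrix_mult_def transpose_def sum_3 mat_def algebra_simps)
  have d: "det R = 1"
    unfolding R_def det_3 by (simp add: algebra_simps)
  have "(\<lambda>x. R *v x) ` (lattice_rows (vector [vector [1,2,1], vector [-1,1,2], vector [2,-2,2]])) = L0"
    unfolding L0_eq
    by (rule img[where s="-1"]) (simp_all add: R_def vec_eq_iff forall_3 matrix_vector_mult_def sum_3 algebra_simps)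
  then show ?thesis unfolding congruent3_def using o d by blast
qed

lemma cong3: "congruent3 (lattice_rows (vector [vector [1,1,2], vector [2,-1,1], vector [2,2,-2]])) L0"
proof -
  define R :: "real^3^3" where "R = vector [vector [(sqrt 2 * sqrt 3) / 6, (sqrt 2 * sqrt 3) / 6, (sqrt 2 * sqrt 3) / 3], vector [- sqrt 2 / 2, sqrt 2 / 2, 0], vector [- sqrt 3 / 3, - sqrt 3 / 3, sqrt 3 / 3]]"
  have o: "orthogonal_matrix R"
    unfolding orthogonal_matrix_def R_def
    by (simp add: vec_eq_iff forall_3 matrix_matrix_mult_def transpose_def sum_3 mat_def algebra_simps)
  have d: "det R = 1"
    unfolding R_def det_3 by (simp add: algebra_simps)
  have "(\<lambda>x. R *v x) ` (lattice_rows (vector [vector [1,1,2], vector [2,-1,1], vector [2,2,-2]])) = L0"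
    unfolding L0_eq
    by (rule img[where s="-1"]) (simp_all add: R_def vec_eq_iff forall_3 matrix_vector_mult_def sum_3 algebra_simps)
  then show ?thesis unfolding congruent3_def using o d by blast
qed

lemma cong4: "congruent3 (lattice_rows (vector [vector [2,-1,-1], vector [-1,2,-1], vector [2,2,2]])) L0"
proof -
  define R :: "real^3^3" where "R = vector [vector [(sqrt 2 * sqrt 3) / 3, - (sqrt 2 * sqrt 3) / 6, - (sqrt 2 * sqrt 3) / 6], vector [0, sqrt 2 / 2, - sqrt 2 / 2], vector [sqrt 3 / 3, sqrt 3 / 3, sqrt 3 / 3]]"
  have o: "orthogonal_matrix R"
    unfolding orthogonal_matrix_def R_def
    by (simp add: vec_eq_iff forall_3 matrix_matrix_mult_def transpose_def sum_3 mat_def algebra_simps)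
  have d: "det R = 1"
    unfolding R_def det_3 by (simp add: algebra_simps)
  have "(\<lambda>x. R *v x) ` (lattice_rows (vector [vector [2,-1,-1], vector [-1,2,-1], vector [2,2,2]])) = L0"
    unfolding L0_eq
    by (rule img[where s="1"]) (simp_all add: R_def vec_eq_iff forall_3 matrix_vector_mult_def sum_3 algebra_simps)
  then show ?thesis unfolding congruent3_def using o d by blast
qed

lemma inter: "lattice_rows (vector [vector [2,1,1], vector [1,2,-1], vector [-2,2,2]])
  \<inter> lattice_rows (vector [vector [1,2,1], vector [-1,1,2], vector [2,-2,2]])
  \<inter> lattice_rows (vector [vector [1,1,2], vector [2,-1,1], vector [2,2,-2]])
  \<inter> lattice_rows (vector [vector [2,-1,-1], vector [-1,2,-1], vector [2,2,2]])
  = lattice_rows (vector [vector [3,3,0], vector [3,-3,0], vector [0,3,-3]])"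
proof (intro set_eqI iffI)
  fix x :: "real^3"
  assume "x \<in> lattice_rows (vector [vector [2,1,1], vector [1,2,-1], vector [-2,2,2]])
  \<inter> lattice_rows (vector [vector [1,2,1], vector [-1,1,2], vector [2,-2,2]])
  \<inter> lattice_rows (vector [vector [1,1,2], vector [2,-1,1], vector [2,2,-2]])
  \<inter> lattice_rows (vector [vector [2,-1,-1], vector [-1,2,-1], vector [2,2,2]])"
  then obtain a1 b1 c1 a2 b2 c2 a3 b3 c3 a4 b4 c4 :: int where
    e1: "x$1 = of_int a1 * 2 + of_int b1 * 1 + of_int c1 * (-2)" "x$2 = of_int a1 * 1 + of_int b1 * 2 + of_int c1 * 2" "x$3 = of_int a1 * 1 + of_int b1 * (-1) + of_int c1 * 2"
    and e2: "x$1 = of_int a2 * 1 + of_int b2 * (-1) + of_int c2 * 2" "x$2 = of_int a2 * 2 + of_int b2 * 1 + of_int c2 * (-2)" "x$3 = of_int a2 * 1 + of_int b2 * 2 + of_int c2 * 2"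
    and e3: "x$1 = of_int a3 * 1 + of_int b3 * 2 + of_int c3 * 2" "x$2 = of_int a3 * 1 + of_int b3 * (-1) + of_int c3 * 2" "x$3 = of_int a3 * 2 + of_int b3 * 1 + of_int c3 * (-2)"
    and e4: "x$1 = of_int a4 * 2 + of_int b4 * (-1) + of_int c4 * 2" "x$2 = of_int a4 * (-1) + of_int b4 * 2 + of_int c4 * 2" "x$3 = of_int a4 * (-1) + of_int b4 * (-1) + of_int c4 * 2"
    unfolding Int_iff mem3 by (auto simp del: of_int_mult)
  show "x \<in> lattice_rows (vector [vector [3,3,0], vector [3,-3,0], vector [0,3,-3]])"
    unfolding mem3
    by (rule exI[of _ c4], rule exI[of _ "-c1"], rule exI[of _ "-c1-c2"]) (simp; use e1 e2 e3 e4 in linarith)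
next
  fix x :: "real^3"
  assume "x \<in> lattice_rows (vector [vector [3,3,0], vector [3,-3,0], vector [0,3,-3]])"
  then obtain d1 d2 d3 :: int where
    e: "x$1 = of_int d1 * 3 + of_int d2 * 3 + of_int d3 * 0" "x$2 = of_int d1 * 3 + of_int d2 * (-3) + of_int d3 * 3" "x$3 = of_int d1 * 0 + of_int d2 * 0 + of_int d3 * (-3)"
    unfolding mem3 by (auto simp del: of_int_mult)
  have "x \<in> lattice_rows (vector [vector [2,1,1], vector [1,2,-1], vector [-2,2,2]])"
    unfolding mem3
    by (rule exI[of _ "d1+d2-d3"], rule exI[of _ "d1-d2+2*d3"], rule exI[of _ "-d2"]) (simp; use e in linarith)
  moreover have "x \<in> lattice_rows (vector [vector [1,2,1], vector [-1,1,2], vector [2,-2,2]])"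
    unfolding mem3
    by (rule exI[of _ "2*d1+d3"], rule exI[of _ "-d1-d2-d3"], rule exI[of _ "d2-d3"]) (simp; use e in linarith)
  moreover have "x \<in> lattice_rows (vector [vector [1,1,2], vector [2,-1,1], vector [2,2,-2]])"
    unfolding mem3
    by (rule exI[of _ "d1-d2"], rule exI[of _ "2*d2-d3"], rule exI[of _ "d1+d3"]) (simp; use e in linarith)
  moreover have "x \<in> lattice_rows (vector [vector [2,-1,-1], vector [-1,2,-1], vector [2,2,2]])"
    unfolding mem3
    by (rule exI[of _ "d1+d2+d3"], rule exI[of _ "d1-d2+2*d3"], rule exI[of _ "d1"]) (simp; use e in linarith)
  ultimately show "x \<in> lattice_rows (vector [vector [2,1,1], vector [1,2,-1], vector [-2,2,2]])
  \<inter> lattice_rows (vector [vector [1,2,1], vector [-1,1,2], vector [2,-2,2]])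
  \<inter> lattice_rows (vector [vector [1,1,2], vector [2,-1,1], vector [2,2,-2]])
  \<inter> lattice_rows (vector [vector [2,-1,-1], vector [-1,2,-1], vector [2,2,2]])" by blast
qed

theorem mainTheorem4:
  defines "\<Lambda>1 \<equiv> lattice_rows (vector [vector [2,1,1], vector [1,2,-1], vector [-2,2,2]])"
      and "\<Lambda>2 \<equiv> lattice_rows (vector [vector [1,2,1], vector [-1,1,2], vector [2,-2,2]])"
      and "\<Lambda>3 \<equiv> lattice_rows (vector [vector [1,1,2], vector [2,-1,1], vector [2,2,-2]])"
      and "\<Lambda>4 \<equiv> lattice_rows (vector [vector [2,-1,-1], vector [-1,2,-1], vector [2,2,2]])"
  shows "congruent3 \<Lambda>1 L0 \<and> congruent3 \<Lambda>2 L0 \<and> congruent3 \<Lambda>3 L0 \<and> congruent3 \<Lambda>4 L0 \<and>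
         \<Lambda>1 \<inter> \<Lambda>2 \<inter> \<Lambda>3 \<inter> \<Lambda>4 =
           lattice_rows (vector [vector [3,3,0], vector [3,-3,0], vector [0,3,-3]])"
  unfolding assms using cong1 cong2 cong3 cong4 inter by blast

end
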